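(* Let $M=(X,(\leq_k)_{k=1,\dots,n})$ be a multichain with components $C_k=(X,\leq_k)$, let $L:=\prod_{k=1}^n C_k$, let $\delta:X\to L$ be the diagonal map $\delta(x)=(x,\dots,x)$, let $\Delta(L)$ be the join-subsemilattice of $L$ generated by $\delta(X)$, and let $\hat\Delta(L)$ be $\Delta(L)$ with a new least element added. Then the join-semilattice $K(C(M))$ of compact elements of $C(M)$ is isomorphic to $\hat\Delta(L)$ via a join-preserving map.
   Context: A multichain is a set $X$ with finitely many linear orders $\leq_1,\dots,\leq_n$. $C(M)$ is the closure system on $X$ whose closed sets are the sets $\bigcap_{k=1}^n I_k$ with $I_k$ an initial segment of $(X,\leq_k)$, ordered by inclusion; its compact elements are the closures of finite subsets of $X$. $L$ carries the componentwise order. *)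

theory Defs
  imports Main
begin

definition linear_order_on_set :: "'a set \<Rightarrow> ('a \<Rightarrow> 'a \<Rightarrow> bool) \<Rightarrow> bool" where
  "linear_order_on_set X r \<longleftrightarrow>
     (\<forall>x\<in>X. r x x) \<and>
     (\<forall>x\<in>X. \<forall>y\<in>X. r x y \<and> r y x \<longrightarrow> x = y) \<and>
     (\<forall>x\<in>X. \<forall>y\<in>X. \<forall>z\<in>X. r x y \<and> r y z \<longrightarrow> r x z) \<and>
     (\<forall>x\<in>X. \<forall>y\<in>X. r x y \<or> r y x)"

definition multichain :: "'a set \<Rightarrow> nat \<Rightarrow> (nat \<Rightarrow> 'a \<Rightarrow> 'a \<Rightarrow> bool) \<Rightarrow> bool" where
  "multichain X n le \<longleftrightarrow> (\<forall>k\<in>{1..n}. linear_order_on_set X (le k))"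

definition init_seg :: "'a set \<Rightarrow> ('a \<Rightarrow> 'a \<Rightarrow> bool) \<Rightarrow> 'a set \<Rightarrow> bool" where
  "init_seg X r I \<longleftrightarrow> I \<subseteq> X \<and> (\<forall>x\<in>I. \<forall>y\<in>X. r y x \<longrightarrow> y \<in> I)"

definition closed_sets :: "'a set \<Rightarrow> nat \<Rightarrow> (nat \<Rightarrow> 'a \<Rightarrow> 'a \<Rightarrow> bool) \<Rightarrow> 'a set set" where
  "closed_sets X n le =
     {A. \<exists>I. (\<forall>k\<in>{1..n}. init_seg X (le k) (I k)) \<and> A = (\<Inter>k\<in>{1..n}. I k)}"

definition closure_M :: "'a set \<Rightarrow> nat \<Rightarrow> (nat \<Rightarrow> 'a \<Rightarrow> 'a \<Rightarrow> bool) \<Rightarrow> 'a set \<Rightarrow> 'a set" where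
  "closure_M X n le F = \<Inter>{A \<in> closed_sets X n le. F \<subseteq> A}"

definition compact_elems :: "'a set \<Rightarrow> nat \<Rightarrow> (nat \<Rightarrow> 'a \<Rightarrow> 'a \<Rightarrow> bool) \<Rightarrow> 'a set set" where
  "compact_elems X n le = {closure_M X n le F | F. finite F \<and> F \<subseteq> X}"

definition join_C :: "'a set \<Rightarrow> nat \<Rightarrow> (nat \<Rightarrow> 'a \<Rightarrow> 'a \<Rightarrow> bool) \<Rightarrow> 'a set \<Rightarrow> 'a set \<Rightarrow> 'a set" where
  "join_C X n le A B = closure_M X n le (A \<union> B)"

definition prodL :: "'a set \<Rightarrow> nat \<Rightarrow> (nat \<Rightarrow> 'a) set" where
  "prodL X n = {f. (\<forall>k\<in>{1..n}. f k \<in> X) \<and> (\<forall>k. k \<notin> {1..n} \<longrightarrow> f k = undefined)}"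

definition leL :: "nat \<Rightarrow> (nat \<Rightarrow> 'a \<Rightarrow> 'a \<Rightarrow> bool) \<Rightarrow> (nat \<Rightarrow> 'a) \<Rightarrow> (nat \<Rightarrow> 'a) \<Rightarrow> bool" where
  "leL n le f g \<longleftrightarrow> (\<forall>k\<in>{1..n}. le k (f k) (g k))"

definition joinL :: "nat \<Rightarrow> (nat \<Rightarrow> 'a \<Rightarrow> 'a \<Rightarrow> bool) \<Rightarrow> (nat \<Rightarrow> 'a) \<Rightarrow> (nat \<Rightarrow> 'a) \<Rightarrow> (nat \<Rightarrow> 'a)" where
  "joinL n le f g = (\<lambda>k. if k \<in> {1..n} then (if le k (f k) (g k) then g k else f k) else undefined)"

definition delta :: "nat \<Rightarrow> 'a \<Rightarrow> (nat \<Rightarrow> 'a)" where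
  "delta n x = (\<lambda>k. if k \<in> {1..n} then x else undefined)"

inductive_set DeltaL :: "'a set \<Rightarrow> nat \<Rightarrow> (nat \<Rightarrow> 'a \<Rightarrow> 'a \<Rightarrow> bool) \<Rightarrow> (nat \<Rightarrow> 'a) set"
  for X n le where
  gen: "x \<in> X \<Longrightarrow> delta n x \<in> DeltaL X n le"
| join: "f \<in> DeltaL X n le \<Longrightarrow> g \<in> DeltaL X n le \<Longrightarrow> joinL n le f g \<in> DeltaL X n le"

text \<open>hat Delta(L): Delta(L) with a new least element None adjoined.\<close>
definition hatDeltaL :: "'a set \<Rightarrow> nat \<Rightarrow> (nat \<Rightarrow> 'a \<Rightarrow> 'a \<Rightarrow> bool) \<Rightarrow> (nat \<Rightarrow> 'a) option set" where
  "hatDeltaL X n le = insert None (Some ` DeltaL X n le)"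

fun le_hat :: "nat \<Rightarrow> (nat \<Rightarrow> 'a \<Rightarrow> 'a \<Rightarrow> bool) \<Rightarrow> (nat \<Rightarrow> 'a) option \<Rightarrow> (nat \<Rightarrow> 'a) option \<Rightarrow> bool" where
  "le_hat n le None _ = True"
| "le_hat n le (Some f) None = False"
| "le_hat n le (Some f) (Some g) = leL n le f g"

fun join_hat :: "nat \<Rightarrow> (nat \<Rightarrow> 'a \<Rightarrow> 'a \<Rightarrow> bool) \<Rightarrow> (nat \<Rightarrow> 'a) option \<Rightarrow> (nat \<Rightarrow> 'a) option \<Rightarrow> (nat \<Rightarrow> 'a) option" where
  "join_hat n le None b = b"
| "join_hat n le (Some f) None = Some f"
| "join_hat n le (Some f) (Some g) = Some (joinL n le f g)"

end

theory Submission
  imports Defs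
begin

definition mx :: "('a \<Rightarrow> 'a \<Rightarrow> bool) \<Rightarrow> 'a set \<Rightarrow> 'a" where
  "mx r F = (THE m. m \<in> F \<and> (\<forall>y\<in>F. r y m))"

definition vec :: "nat \<Rightarrow> (nat \<Rightarrow> 'a \<Rightarrow> 'a \<Rightarrow> bool) \<Rightarrow> 'a set \<Rightarrow> (nat \<Rightarrow> 'a)" where
  "vec n le F = (\<lambda>k. if k \<in> {1..n} then mx (le k) F else undefined)"

definition Dn :: "'a set \<Rightarrow> nat \<Rightarrow> (nat \<Rightarrow> 'a \<Rightarrow> 'a \<Rightarrow> bool) \<Rightarrow> (nat \<Rightarrow> 'a) \<Rightarrow> 'a set" where
  "Dn X n le v = {y\<in>X. \<forall>k\<in>{1..n}. le k y (v k)}"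

context
  fixes X :: "'a set" and n :: nat and le :: "nat \<Rightarrow> 'a \<Rightarrow> 'a \<Rightarrow> bool"
  assumes n1: "n \<ge> 1" and mc: "multichain X n le"
begin

lemma refl': "k \<in> {1..n} \<Longrightarrow> x \<in> X \<Longrightarrow> le k x x"
  using mc unfolding multichain_def linear_order_on_set_def by blast
lemma antisym': "k \<in> {1..n} \<Longrightarrow> x \<in> X \<Longrightarrow> y \<in> X \<Longrightarrow> le k x y \<Longrightarrow> le k y x \<Longrightarrow> x = y"
  using mc unfolding multichain_def linear_order_on_set_def by blast
lemma trans': "k \<in> {1..n} \<Longrightarrow> x \<in> X \<Longrightarrow> y \<in> X \<Longrightarrow> z \<in> X \<Longrightarrow> le k x y \<Longrightarrow> le k y z \<Longrightarrow> le k x z"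
  using mc unfolding multichain_def linear_order_on_set_def by blast
lemma total': "k \<in> {1..n} \<Longrightarrow> x \<in> X \<Longrightarrow> y \<in> X \<Longrightarrow> le k x y \<or> le k y x"
  using mc unfolding multichain_def linear_order_on_set_def by blast

lemma max_ex:
  assumes k: "k \<in> {1..n}"
  shows "finite F \<Longrightarrow> F \<noteq> {} \<Longrightarrow> F \<subseteq> X \<Longrightarrow> \<exists>m\<in>F. \<forall>y\<in>F. le k y m"
proof (induction F rule: finite_ne_induct)
  case (singleton x)
  then show ?case using refl'[OF k] by auto
next
  case (insert x F)
  then obtain m where m: "m \<in> F" "\<forall>y\<in>F. le k y m" by auto
  have xX: "x \<in> X" and mX: "m \<in> X" and FX: "F \<subseteq> X" using insert m by auto
  show ?case
  proof (cases "le k x m")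
    case True
    then show ?thesis using m by auto
  next
    case False
    then have "le k m x" using total'[OF k xX mX] by auto
    then have "\<forall>y\<in>F. le k y x" using m trans'[OF k _ mX xX] FX by blast
    then show ?thesis using refl'[OF k xX] by auto
  qed
qed

lemma mx_unique:
  assumes k: "k \<in> {1..n}" and FX: "F \<subseteq> X" and m: "m \<in> F" "\<forall>y\<in>F. le k y m"
  shows "mx (le k) F = m"
  unfolding mx_def
proof (rule the_equality)
  show "m \<in> F \<and> (\<forall>y\<in>F. le k y m)" using m by auto
next
  fix m' assume "m' \<in> F \<and> (\<forall>y\<in>F. le k y m')"
  then show "m' = m" using m FX antisym'[OF k] by blast
qed

lemma mx_prop:
  assumes k: "k \<in> {1..n}" and "finite F" "F \<noteq> {}" and FX: "F \<subseteq> X"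
  shows "mx (le k) F \<in> F \<and> (\<forall>y\<in>F. le k y (mx (le k) F))"
proof -
  obtain m where "m \<in> F" "\<forall>y\<in>F. le k y m" using max_ex[OF k assms(2-4)] by auto
  then show ?thesis using mx_unique[OF k FX] by auto
qed

lemma closed_mem:
  assumes "A \<in> closed_sets X n le" "y \<in> X" "\<forall>k\<in>{1..n}. \<exists>a\<in>A. le k y a"
  shows "y \<in> A"
proof -
  obtain I where I: "\<forall>k\<in>{1..n}. init_seg X (le k) (I k)" "A = (\<Inter>k\<in>{1..n}. I k)"
    using assms(1) unfolding closed_sets_def by auto
  have "y \<in> I k" if k: "k \<in> {1..n}" for k
  proof -
    obtain a where a: "a \<in> A" "le k y a" using assms(3) k by blast
    have "a \<in> I k" using a I k by auto
    then show ?thesis using I(1) k a assms(2) unfolding init_seg_def by blast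
  qed
  then show ?thesis using I by auto
qed

lemma closed_sub:
  assumes "A \<in> closed_sets X n le" shows "A \<subseteq> X"
proof -
  obtain I where I: "\<forall>k\<in>{1..n}. init_seg X (le k) (I k)" "A = (\<Inter>k\<in>{1..n}. I k)"
    using assms(1) unfolding closed_sets_def by auto
  have "1 \<in> {1..n}" using n1 by auto
  then have "A \<subseteq> I 1" using I by auto
  also have "I 1 \<subseteq> X" using I(1) \<open>1 \<in> {1..n}\<close> unfolding init_seg_def by auto
  finally show ?thesis .
qed

lemma D_closed:
  assumes v: "\<forall>k\<in>{1..n}. v k \<in> X"
  shows "Dn X n le v \<in> closed_sets X n le"
  unfolding closed_sets_def
proof (intro CollectI exI conjI)
  let ?I = "\<lambda>k. {y\<in>X. le k y (v k)}"
  show "\<forall>k\<in>{1..n}. init_seg X (le k) (?I k)"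
    unfolding init_seg_def using v trans' by blast
  have "1 \<in> {1..n}" using n1 by auto
  then show "Dn X n le v = (\<Inter>k\<in>{1..n}. ?I k)"
    unfolding Dn_def by blast
qed

lemma closure_sub: "S \<subseteq> closure_M X n le S"
  unfolding closure_M_def by blast

lemma closure_least: "C \<in> closed_sets X n le \<Longrightarrow> S \<subseteq> C \<Longrightarrow> closure_M X n le S \<subseteq> C"
  unfolding closure_M_def by blast

lemma closure_cl_iff: "C \<in> closed_sets X n le \<Longrightarrow> closure_M X n le S \<subseteq> C \<longleftrightarrow> S \<subseteq> C"
  using closure_least closure_sub by blast

lemma closure_eqI: "(\<And>C. C \<in> closed_sets X n le \<Longrightarrow> S \<subseteq> C \<longleftrightarrow> T \<subseteq> C) \<Longrightarrow>
   closure_M X n le S = closure_M X n le T"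
  unfolding closure_M_def by (rule arg_cong[where f=Inter]) auto

lemma vec_prop:
  assumes k: "k \<in> {1..n}" and F: "finite F" "F \<noteq> {}" "F \<subseteq> X"
  shows "vec n le F k \<in> F" "vec n le F k \<in> X" "\<forall>y\<in>F. le k y (vec n le F k)"
proof -
  have e: "vec n le F k = mx (le k) F" using k unfolding vec_def by simp
  show "vec n le F k \<in> F" "\<forall>y\<in>F. le k y (vec n le F k)" using mx_prop[OF k F] unfolding e by auto
  then show "vec n le F k \<in> X" using F(3) by blast
qed

lemma vec_X: "finite F \<Longrightarrow> F \<noteq> {} \<Longrightarrow> F \<subseteq> X \<Longrightarrow> \<forall>k\<in>{1..n}. vec n le F k \<in> X"
  using vec_prop by blast

lemma closure_F:
  assumes F: "finite F" "F \<noteq> {}" "F \<subseteq> X"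
  shows "closure_M X n le F = Dn X n le (vec n le F)"
proof
  have v: "\<forall>k\<in>{1..n}. vec n le F k \<in> X" using vec_X[OF F] .
  have "F \<subseteq> Dn X n le (vec n le F)" using vec_prop(3)[OF _ F] F(3) unfolding Dn_def by blast
  then show "closure_M X n le F \<subseteq> Dn X n le (vec n le F)"
    using closure_least D_closed[OF v] by blast
next
  show "Dn X n le (vec n le F) \<subseteq> closure_M X n le F"
  proof
    fix y assume y: "y \<in> Dn X n le (vec n le F)"
    have "y \<in> C" if C: "C \<in> closed_sets X n le" "F \<subseteq> C" for C
    proof (rule closed_mem[OF C(1)])
      show "y \<in> X" using y unfolding Dn_def by auto
      show "\<forall>k\<in>{1..n}. \<exists>a\<in>C. le k y a"
        using y vec_prop(1)[OF _ F] C(2) unfolding Dn_def by blast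
    qed
    then show "y \<in> closure_M X n le F" unfolding closure_M_def by blast
  qed
qed

lemma closure_empty: "closure_M X n le {} = {}"
proof -
  have "{} \<in> closed_sets X n le"
    unfolding closed_sets_def
  proof (intro CollectI exI conjI)
    show "\<forall>k\<in>{1..n}. init_seg X (le k) ((\<lambda>k. {}) k)" unfolding init_seg_def by auto
    show "{} = (\<Inter>k\<in>{1..n}. (\<lambda>k. {}) k)" using n1 by auto
  qed
  then show ?thesis using closure_least by blast
qed

lemma closure_union:
  "closure_M X n le (closure_M X n le F \<union> closure_M X n le G) = closure_M X n le (F \<union> G)"
  by (rule closure_eqI) (simp add: closure_cl_iff)

lemma vec_union:
  assumes F: "finite F" "F \<noteq> {}" "F \<subseteq> X" and G: "finite G" "G \<noteq> {}" "G \<subseteq> X"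
  shows "vec n le (F \<union> G) = joinL n le (vec n le F) (vec n le G)"
proof
  fix k
  show "vec n le (F \<union> G) k = joinL n le (vec n le F) (vec n le G) k"
  proof (cases "k \<in> {1..n}")
    case False then show ?thesis unfolding vec_def joinL_def by auto
  next
    case k: True
    note mF = mx_prop[OF k F] and mG = mx_prop[OF k G]
    let ?a = "mx (le k) F" and ?b = "mx (le k) G"
    have aX: "?a \<in> X" and bX: "?b \<in> X" using mF mG F G by auto
    let ?c = "if le k ?a ?b then ?b else ?a"
    have "mx (le k) (F \<union> G) = ?c"
    proof (rule mx_unique[OF k])
      show "F \<union> G \<subseteq> X" using F G by auto
      show "?c \<in> F \<union> G" using mF mG by auto
      show "\<forall>y\<in>F \<union> G. le k y ?c"
      proof
        fix y assume y: "y \<in> F \<union> G"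
        then have yX: "y \<in> X" using F G by auto
        show "le k y ?c"
        proof (cases "le k ?a ?b")
          case True
          then show ?thesis using y mF mG trans'[OF k yX aX bX] by auto
        next
          case False
          then have "le k ?b ?a" using total'[OF k aX bX] by auto
          then show ?thesis using False y mF mG trans'[OF k yX bX aX] by auto
        qed
      qed
    qed
    then show ?thesis using k unfolding vec_def joinL_def by auto
  qed
qed

lemma vec_single: "x \<in> X \<Longrightarrow> vec n le {x} = delta n x"
proof -
  assume x: "x \<in> X"
  have "mx (le k) {x} = x" if "k \<in> {1..n}" for k
    using mx_unique[OF that, of "{x}" x] x refl'[OF that x] by auto
  then show ?thesis unfolding vec_def delta_def by auto
qed

lemma DeltaL_char1: "f \<in> DeltaL X n le \<Longrightarrow> \<exists>F. finite F \<and> F \<noteq> {} \<and> F \<subseteq> X \<and> f = vec n le F"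
proof (induction rule: DeltaL.induct)
  case (gen x)
  then show ?case using vec_single[OF gen] by (intro exI[of _ "{x}"]) auto
next
  case (join f g)
  then obtain F G where "finite F \<and> F \<noteq> {} \<and> F \<subseteq> X \<and> f = vec n le F"
    "finite G \<and> G \<noteq> {} \<and> G \<subseteq> X \<and> g = vec n le G" by auto
  then show ?case using vec_union[of F G] by (intro exI[of _ "F \<union> G"]) auto
qed

lemma DeltaL_char2: "finite F \<Longrightarrow> F \<noteq> {} \<Longrightarrow> F \<subseteq> X \<Longrightarrow> vec n le F \<in> DeltaL X n le"
proof (induction F rule: finite_ne_induct)
  case (singleton x)
  then show ?case using vec_single DeltaL.gen by fastforce
next
  case (insert x F)
  have "vec n le (insert x F) = vec n le ({x} \<union> F)" by simp
  also have "\<dots> = joinL n le (vec n le {x}) (vec n le F)"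
    using vec_union[of "{x}" F] insert by auto
  finally show ?case using insert vec_single DeltaL.gen DeltaL.join by fastforce
qed

lemma vec_closure:
  assumes F: "finite F" "F \<noteq> {}" "F \<subseteq> X"
  shows "vec n le (closure_M X n le F) = vec n le F"
proof
  fix k
  show "vec n le (closure_M X n le F) k = vec n le F k"
  proof (cases "k \<in> {1..n}")
    case False then show ?thesis unfolding vec_def by auto
  next
    case k: True
    have "mx (le k) (closure_M X n le F) = mx (le k) F"
    proof (rule mx_unique[OF k])
      show "closure_M X n le F \<subseteq> X" using closure_F[OF F] unfolding Dn_def by auto
      show "mx (le k) F \<in> closure_M X n le F" using mx_prop[OF k F] closure_sub by blast
      show "\<forall>y\<in>closure_M X n le F. le k y (mx (le k) F)"
        using closure_F[OF F] k unfolding Dn_def vec_def by auto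
    qed
    then show ?thesis using k unfolding vec_def by auto
  qed
qed

lemma order_F:
  assumes F: "finite F" "F \<noteq> {}" "F \<subseteq> X" and G: "finite G" "G \<noteq> {}" "G \<subseteq> X"
  shows "closure_M X n le F \<subseteq> closure_M X n le G \<longleftrightarrow> leL n le (vec n le F) (vec n le G)"
proof
  assume sub: "closure_M X n le F \<subseteq> closure_M X n le G"
  show "leL n le (vec n le F) (vec n le G)"
    unfolding leL_def
  proof
    fix k assume k: "k \<in> {1..n}"
    have "mx (le k) F \<in> closure_M X n le G" using mx_prop[OF k F] closure_sub sub by blast
    then show "le k (vec n le F k) (vec n le G k)"
      using closure_F[OF G] k unfolding Dn_def vec_def by auto
  qed
next
  assume l: "leL n le (vec n le F) (vec n le G)"
  have vG: "\<forall>k\<in>{1..n}. vec n le G k \<in> X" using vec_X[OF G] .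
  have vF: "\<forall>k\<in>{1..n}. vec n le F k \<in> X" using vec_X[OF F] .
  show "closure_M X n le F \<subseteq> closure_M X n le G"
    unfolding closure_F[OF F] closure_F[OF G] Dn_def
    using l vF vG trans' unfolding leL_def by blast
qed

lemma main:
  "\<exists>\<phi>. bij_betw \<phi> (compact_elems X n le) (hatDeltaL X n le)
            \<and> (\<forall>A\<in>compact_elems X n le. \<forall>B\<in>compact_elems X n le.
                  A \<subseteq> B \<longleftrightarrow> le_hat n le (\<phi> A) (\<phi> B))
            \<and> (\<forall>A\<in>compact_elems X n le. \<forall>B\<in>compact_elems X n le.
                  \<phi> (join_C X n le A B) = join_hat n le (\<phi> A) (\<phi> B))"
proof -
  define \<phi> where "\<phi> A = (if A = {} then None else Some (vec n le A))" for A :: "'a set"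
  let ?C = "closure_M X n le"
  have ne: "?C F \<noteq> {}" if "F \<noteq> {}" for F using closure_sub[of F] that by auto
  have phiC: "\<phi> (?C F) = (if F = {} then None else Some (vec n le F))"
    if "finite F" "F \<subseteq> X" for F
    using that closure_empty vec_closure ne unfolding \<phi>_def by auto
  have CE: "compact_elems X n le = {?C F | F. finite F \<and> F \<subseteq> X}"
    unfolding compact_elems_def by simp
  have ord: "?C F \<subseteq> ?C G \<longleftrightarrow> le_hat n le (\<phi> (?C F)) (\<phi> (?C G))"
    if F: "finite F" "F \<subseteq> X" and G: "finite G" "G \<subseteq> X" for F G
  proof (cases "F = {}")
    case True then show ?thesis using phiC[OF F] closure_empty by simp
  next
    case Fne: False
    show ?thesis
    proof (cases "G = {}")
      case True then show ?thesis using phiC[OF F] phiC[OF G] closure_empty ne[OF Fne] Fne by simp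
    next
      case False
      then show ?thesis using phiC[OF F] phiC[OF G] Fne order_F F G by simp
    qed
  qed
  have join: "\<phi> (join_C X n le (?C F) (?C G)) = join_hat n le (\<phi> (?C F)) (\<phi> (?C G))"
    if F: "finite F" "F \<subseteq> X" and G: "finite G" "G \<subseteq> X" for F G
  proof -
    have "join_C X n le (?C F) (?C G) = ?C (F \<union> G)"
      unfolding join_C_def by (rule closure_union)
    moreover have FG: "finite (F \<union> G)" "F \<union> G \<subseteq> X" using F G by auto
    ultimately show ?thesis
      using phiC[OF F] phiC[OF G] phiC[OF FG] vec_union[of F G] F G by auto
  qed
  have refl_img: "le_hat n le (\<phi> (?C F)) (\<phi> (?C F))" if "finite F" "F \<subseteq> X" for F
  proof -
    have "?C F \<subseteq> ?C F" by (rule subset_refl)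
    then show ?thesis by (rule iffD1[OF ord[OF that that]])
  qed
  have inj: "inj_on \<phi> (compact_elems X n le)"
  proof (rule inj_onI)
    fix A B assume A: "A \<in> compact_elems X n le" and B: "B \<in> compact_elems X n le"
      and eq: "\<phi> A = \<phi> B"
    obtain F where F: "finite F" "F \<subseteq> X" "A = ?C F" using A CE by auto
    obtain G where G: "finite G" "G \<subseteq> X" "B = ?C G" using B CE by auto
    have r1: "le_hat n le (\<phi> A) (\<phi> B)" using refl_img[OF F(1,2)] eq F(3) by simp
    have r2: "le_hat n le (\<phi> B) (\<phi> A)" using refl_img[OF G(1,2)] eq G(3) by simp
    have "A \<subseteq> B" using r1 ord[OF F(1,2) G(1,2)] F(3) G(3) by simp
    moreover have "B \<subseteq> A" using r2 ord[OF G(1,2) F(1,2)] F(3) G(3) by simp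
    ultimately show "A = B" by (rule subset_antisym)
  qed
  have img: "\<phi> ` compact_elems X n le = hatDeltaL X n le"
  proof
    show "\<phi> ` compact_elems X n le \<subseteq> hatDeltaL X n le"
    proof
      fix y assume "y \<in> \<phi> ` compact_elems X n le"
      then obtain F where F: "finite F" "F \<subseteq> X" "y = \<phi> (?C F)" using CE by auto
      then show "y \<in> hatDeltaL X n le"
        using phiC[OF F(1,2)] DeltaL_char2[of F] unfolding hatDeltaL_def by auto
    qed
  next
    show "hatDeltaL X n le \<subseteq> \<phi> ` compact_elems X n le"
    proof
      fix y assume "y \<in> hatDeltaL X n le"
      then consider "y = None" | f where "y = Some f" "f \<in> DeltaL X n le"
        unfolding hatDeltaL_def by auto
      then show "y \<in> \<phi> ` compact_elems X n le"
      proof cases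
        case 1
        have "?C {} \<in> compact_elems X n le" using CE by auto
        moreover have "\<phi> (?C {}) = None" using phiC[of "{}"] by simp
        ultimately show ?thesis using 1 by force
      next
        case 2
        then obtain F where F: "finite F" "F \<noteq> {}" "F \<subseteq> X" "f = vec n le F"
          using DeltaL_char1 by blast
        have "?C F \<in> compact_elems X n le" using CE F by auto
        moreover have "\<phi> (?C F) = y" using phiC[OF F(1,3)] F 2 by simp
        ultimately show ?thesis by force
      qed
    qed
  qed
  show ?thesis
  proof (intro exI[of _ \<phi>] conjI ballI)
    show "bij_betw \<phi> (compact_elems X n le) (hatDeltaL X n le)"
      unfolding bij_betw_def using inj img by auto
  next
    fix A B assume A: "A \<in> compact_elems X n le" and B: "B \<in> compact_elems X n le"
    obtain F where F: "finite F" "F \<subseteq> X" "A = ?C F" using A CE by auto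
    obtain G where G: "finite G" "G \<subseteq> X" "B = ?C G" using B CE by auto
    show "A \<subseteq> B \<longleftrightarrow> le_hat n le (\<phi> A) (\<phi> B)" using ord[OF F(1,2) G(1,2)] F G by simp
  next
    fix A B assume A: "A \<in> compact_elems X n le" and B: "B \<in> compact_elems X n le"
    obtain F where F: "finite F" "F \<subseteq> X" "A = ?C F" using A CE by auto
    obtain G where G: "finite G" "G \<subseteq> X" "B = ?C G" using B CE by auto
    show "\<phi> (join_C X n le A B) = join_hat n le (\<phi> A) (\<phi> B)" using join[OF F(1,2) G(1,2)] F G by simp
  qed
qed

end

theorem theorem7p14:
  fixes X :: "'a set" and n :: nat and le :: "nat \<Rightarrow> 'a \<Rightarrow> 'a \<Rightarrow> bool"
  assumes "n \<ge> 1"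
    and "multichain X n le"
  shows "\<exists>\<phi>. bij_betw \<phi> (compact_elems X n le) (hatDeltaL X n le)
            \<and> (\<forall>A\<in>compact_elems X n le. \<forall>B\<in>compact_elems X n le.
                  A \<subseteq> B \<longleftrightarrow> le_hat n le (\<phi> A) (\<phi> B))
            \<and> (\<forall>A\<in>compact_elems X n le. \<forall>B\<in>compact_elems X n le.
                  \<phi> (join_C X n le A B) = join_hat n le (\<phi> A) (\<phi> B))"
  by (rule main[OF assms])

end
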